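(* Let $L$ be a BL-comet. Then $L$ is a BL-chain if and only if $\mathrm{pivot}(L)^{\ast\ast}=\mathrm{pivot}(L)$.
   Context: A (commutative) residuated lattice is an algebra $(L,\wedge,\vee,\odot,\rightarrow,0,1)$ such that $(L,\wedge,\vee,0,1)$ is a bounded lattice, $(L,\odot,1)$ is a commutative ordered monoid, and $z\le x\rightarrow y$ iff $x\odot z\le y$ for all $x,y,z\in L$. For $x\in L$ put $x^\ast=x\rightarrow 0$. A BL-algebra is a residuated lattice satisfying $(x\rightarrow y)\vee(y\rightarrow x)=1$ (prelinearity) and $x\odot(x\rightarrow y)=x\wedge y$ (divisibility). A BL-chain is a BL-algebra whose lattice order is total. An element $x$ is idempotent if $x\odot x=x$. For a finite BL-algebra $L$, let $\mathcal{I}(L)$ be its set of idempotent elements; for $x\in\mathcal{I}(L)$ let $\mathcal{C}(x)=\{y\in\mathcal{I}(L): x,y \text{ comparable}\}$; let $\mathcal{D}(L)$ be the set of $x\in\mathcal{I}(L)$ such that $\mathcal{C}(x)=\mathcal{I}(L)$ and $\{y\in\mathcal{I}(L): y\le x\}$ is a chain ($0\in\mathcal{D}(L)$). A finite BL-algebra $L$ is a BL-comet if $\max\mathcal{D}(L)\neq 0$; in that case $\mathrm{pivot}(L)=\max\mathcal{D}(L)$. *)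

theory Defs
  imports Main
begin

record 'a bl_alg =
  carrier :: "'a set"
  meet :: "'a \<Rightarrow> 'a \<Rightarrow> 'a"
  join :: "'a \<Rightarrow> 'a \<Rightarrow> 'a"
  mult :: "'a \<Rightarrow> 'a \<Rightarrow> 'a"
  imp  :: "'a \<Rightarrow> 'a \<Rightarrow> 'a"
  zero :: "'a"
  one  :: "'a"

definition leq :: "('a, 'b) bl_alg_scheme \<Rightarrow> 'a \<Rightarrow> 'a \<Rightarrow> bool" where
  "leq A x y \<longleftrightarrow> meet A x y = x"

definition neg :: "('a, 'b) bl_alg_scheme \<Rightarrow> 'a \<Rightarrow> 'a" where
  "neg A x = imp A x (zero A)"

definition residuated_lattice :: "('a, 'b) bl_alg_scheme \<Rightarrow> bool" where
  "residuated_lattice A \<longleftrightarrow>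
     zero A \<in> carrier A \<and> one A \<in> carrier A \<and>
     (\<forall>x\<in>carrier A. \<forall>y\<in>carrier A.
        meet A x y \<in> carrier A \<and> join A x y \<in> carrier A \<and>
        mult A x y \<in> carrier A \<and> imp A x y \<in> carrier A) \<and>
     \<comment> \<open>bounded lattice\<close>
     (\<forall>x\<in>carrier A. \<forall>y\<in>carrier A. \<forall>z\<in>carrier A.
        meet A x (meet A y z) = meet A (meet A x y) z \<and>
        join A x (join A y z) = join A (join A x y) z) \<and>
     (\<forall>x\<in>carrier A. \<forall>y\<in>carrier A.
        meet A x y = meet A y x \<and> join A x y = join A y x \<and>
        meet A x (join A x y) = x \<and> join A x (meet A x y) = x) \<and>
     (\<forall>x\<in>carrier A. leq A (zero A) x \<and> leq A x (one A)) \<and>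
     \<comment> \<open>commutative ordered monoid\<close>
     (\<forall>x\<in>carrier A. \<forall>y\<in>carrier A. \<forall>z\<in>carrier A.
        mult A x (mult A y z) = mult A (mult A x y) z) \<and>
     (\<forall>x\<in>carrier A. \<forall>y\<in>carrier A. mult A x y = mult A y x) \<and>
     (\<forall>x\<in>carrier A. mult A x (one A) = x) \<and>
     (\<forall>x\<in>carrier A. \<forall>y\<in>carrier A. \<forall>z\<in>carrier A.
        leq A x y \<longrightarrow> leq A (mult A x z) (mult A y z)) \<and>
     \<comment> \<open>residuation\<close>
     (\<forall>x\<in>carrier A. \<forall>y\<in>carrier A. \<forall>z\<in>carrier A.
        leq A z (imp A x y) \<longleftrightarrow> leq A (mult A x z) y)"

definition BL_algebra :: "('a, 'b) bl_alg_scheme \<Rightarrow> bool" where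
  "BL_algebra A \<longleftrightarrow> residuated_lattice A \<and>
     (\<forall>x\<in>carrier A. \<forall>y\<in>carrier A.
        join A (imp A x y) (imp A y x) = one A \<and>
        mult A x (imp A x y) = meet A x y)"

definition is_chain_in :: "('a, 'b) bl_alg_scheme \<Rightarrow> 'a set \<Rightarrow> bool" where
  "is_chain_in A S \<longleftrightarrow> (\<forall>x\<in>S. \<forall>y\<in>S. leq A x y \<or> leq A y x)"

definition BL_chain :: "('a, 'b) bl_alg_scheme \<Rightarrow> bool" where
  "BL_chain A \<longleftrightarrow> BL_algebra A \<and> is_chain_in A (carrier A)"

definition idems :: "('a, 'b) bl_alg_scheme \<Rightarrow> 'a set" where
  "idems A = {x\<in>carrier A. mult A x x = x}"

definition comps :: "('a, 'b) bl_alg_scheme \<Rightarrow> 'a \<Rightarrow> 'a set" where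
  "comps A x = {y\<in>idems A. leq A x y \<or> leq A y x}"

definition Dset :: "('a, 'b) bl_alg_scheme \<Rightarrow> 'a set" where
  "Dset A = {x\<in>idems A. comps A x = idems A \<and> is_chain_in A {y\<in>idems A. leq A y x}}"

definition pivot :: "('a, 'b) bl_alg_scheme \<Rightarrow> 'a" where
  "pivot A = (THE x. x \<in> Dset A \<and> (\<forall>y\<in>Dset A. leq A y x))"

definition BL_comet :: "('a, 'b) bl_alg_scheme \<Rightarrow> bool" where
  "BL_comet A \<longleftrightarrow> BL_algebra A \<and> finite (carrier A) \<and> pivot A \<noteq> zero A"

end

theory Submission
  imports Defs
begin

primrec pw :: "('a, 'b) bl_alg_scheme \<Rightarrow> 'a \<Rightarrow> nat \<Rightarrow> 'a" where
  "pw A x 0 = one A"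
| "pw A x (Suc n) = mult A x (pw A x n)"

locale blc =
  fixes L :: "('a, 'b) bl_alg_scheme"
  assumes bl: "BL_algebra L"
begin

lemma rl: "residuated_lattice L" using bl by (simp add: BL_algebra_def)

lemma cl0: "zero L \<in> carrier L" "one L \<in> carrier L"
  using rl by (auto simp: residuated_lattice_def)

lemma cl: assumes "x \<in> carrier L" "y \<in> carrier L"
  shows "meet L x y \<in> carrier L" "join L x y \<in> carrier L"
        "mult L x y \<in> carrier L" "imp L x y \<in> carrier L"
  using rl assms unfolding residuated_lattice_def by blast+

lemma ax_assoc: assumes "x \<in> carrier L" "y \<in> carrier L" "z \<in> carrier L"
  shows "meet L x (meet L y z) = meet L (meet L x y) z"
        "join L x (join L y z) = join L (join L x y) z"
        "mult L x (mult L y z) = mult L (mult L x y) z"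
  using rl assms unfolding residuated_lattice_def by blast+

lemma ax_comm: assumes "x \<in> carrier L" "y \<in> carrier L"
  shows "meet L x y = meet L y x" "join L x y = join L y x"
        "meet L x (join L x y) = x" "join L x (meet L x y) = x"
        "mult L x y = mult L y x"
  using rl assms unfolding residuated_lattice_def by blast+

lemma ax_bound: assumes "x \<in> carrier L"
  shows "leq L (zero L) x" "leq L x (one L)" "mult L x (one L) = x"
  using rl assms unfolding residuated_lattice_def by blast+

lemma ax_mono: assumes "x \<in> carrier L" "y \<in> carrier L" "z \<in> carrier L" "leq L x y"
  shows "leq L (mult L x z) (mult L y z)"
  using rl assms unfolding residuated_lattice_def by blast

lemma ax_res: assumes "x \<in> carrier L" "y \<in> carrier L" "z \<in> carrier L"
  shows "leq L z (imp L x y) \<longleftrightarrow> leq L (mult L x z) y"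
  using rl assms unfolding residuated_lattice_def by blast

lemma ax_bl: assumes "x \<in> carrier L" "y \<in> carrier L"
  shows "join L (imp L x y) (imp L y x) = one L" "mult L x (imp L x y) = meet L x y"
  using bl assms unfolding BL_algebra_def by blast+

lemma meet_idem: assumes "x \<in> carrier L" shows "meet L x x = x"
proof -
  have "join L x (meet L x x) = x" using ax_comm assms by blast
  hence "meet L x (join L x (meet L x x)) = meet L x x" by simp
  moreover have "meet L x (join L x (meet L x x)) = x" using ax_comm assms cl by blast
  ultimately show ?thesis by simp
qed

lemma refl: "x \<in> carrier L \<Longrightarrow> leq L x x" by (simp add: leq_def meet_idem)

lemma antisym: "x \<in> carrier L \<Longrightarrow> y \<in> carrier L \<Longrightarrow> leq L x y \<Longrightarrow> leq L y x \<Longrightarrow> x = y"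
  unfolding leq_def by (metis ax_comm(1))

lemma trans: assumes "x \<in> carrier L" "y \<in> carrier L" "z \<in> carrier L" "leq L x y" "leq L y z"
  shows "leq L x z"
  using assms unfolding leq_def by (metis ax_assoc(1))

lemma meet_le1: "x \<in> carrier L \<Longrightarrow> y \<in> carrier L \<Longrightarrow> leq L (meet L x y) x"
  unfolding leq_def by (metis ax_assoc(1) ax_comm(1) meet_idem)

lemma meet_le2: "x \<in> carrier L \<Longrightarrow> y \<in> carrier L \<Longrightarrow> leq L (meet L x y) y"
  by (metis ax_comm(1) meet_le1)

lemma join_ge1: "x \<in> carrier L \<Longrightarrow> y \<in> carrier L \<Longrightarrow> leq L x (join L x y)"
  unfolding leq_def by (metis ax_comm(3))

lemma join_ge2: "x \<in> carrier L \<Longrightarrow> y \<in> carrier L \<Longrightarrow> leq L y (join L x y)"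
  by (metis ax_comm(2) join_ge1)

lemma le_join_eq: assumes "x \<in> carrier L" "z \<in> carrier L" "leq L x z" shows "join L x z = z"
proof -
  have "join L x z = join L (meet L x z) z" using assms by (simp add: leq_def)
  also have "\<dots> = join L z (meet L x z)" using ax_comm(2)[OF cl(1)[OF assms(1,2)] assms(2)] .
  also have "\<dots> = join L z (meet L z x)" using ax_comm(1)[OF assms(1,2)] by simp
  also have "\<dots> = z" using ax_comm(4)[OF assms(2,1)] .
  finally show ?thesis .
qed

lemma join_least: assumes "x \<in> carrier L" "y \<in> carrier L" "z \<in> carrier L"
  "leq L x z" "leq L y z" shows "leq L (join L x y) z"
proof -
  have "join L (join L x y) z = join L x (join L y z)" using ax_assoc(2)[OF assms(1-3)] by simp
  also have "\<dots> = z" using le_join_eq[OF assms(2,3,5)] le_join_eq[OF assms(1,3,4)] by simp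
  finally have "join L (join L x y) z = z" .
  hence "meet L (join L x y) z = meet L (join L x y) (join L (join L x y) z)" by simp
  also have "\<dots> = join L x y" using ax_comm(3)[OF cl(2)[OF assms(1,2)] assms(3)] .
  finally show ?thesis by (simp add: leq_def)
qed

lemma le_one_eq: "x \<in> carrier L \<Longrightarrow> leq L (one L) x \<Longrightarrow> x = one L"
  using antisym ax_bound(2) cl0 by blast

lemma le_zero_eq: "x \<in> carrier L \<Longrightarrow> leq L x (zero L) \<Longrightarrow> x = zero L"
  using antisym ax_bound(1) cl0 by blast

lemma mult_one_left: "x \<in> carrier L \<Longrightarrow> mult L (one L) x = x"
  by (metis ax_bound(3) ax_comm(5) cl0(2))

lemma mult_le1: assumes "x \<in> carrier L" "y \<in> carrier L" shows "leq L (mult L x y) x"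
  by (metis assms ax_bound(2,3) ax_comm(5) ax_mono cl0(2))

lemma mult_le2: assumes "x \<in> carrier L" "y \<in> carrier L" shows "leq L (mult L x y) y"
  by (metis assms ax_comm(5) mult_le1)

lemma one_le_imp: assumes "x \<in> carrier L" "y \<in> carrier L"
  shows "leq L (one L) (imp L x y) \<longleftrightarrow> leq L x y"
  using ax_res[OF assms cl0(2)] ax_bound(3)[OF assms(1)] by simp

lemma meet_greatest: assumes "x \<in> carrier L" "y \<in> carrier L" "z \<in> carrier L"
  "leq L z x" "leq L z y" shows "leq L z (meet L x y)"
proof -
  have "meet L z (meet L x y) = meet L (meet L z x) y" using ax_assoc(1)[OF assms(3,1,2)] .
  also have "\<dots> = z" using assms(4,5) unfolding leq_def by simp
  finally show ?thesis unfolding leq_def .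
qed

lemma idem_mult: assumes "p \<in> carrier L" "x \<in> carrier L" "mult L p p = p"
  shows "mult L p x = meet L p x"
proof -
  have i: "imp L p x \<in> carrier L" using cl(4)[OF assms(1,2)] .
  have "meet L p x = mult L p (imp L p x)" using ax_bl(2)[OF assms(1,2)] by simp
  also have "\<dots> = mult L (mult L p p) (imp L p x)" using assms(3) by simp
  also have "\<dots> = mult L p (mult L p (imp L p x))" using ax_assoc(3)[OF assms(1) assms(1) i] by simp
  also have "\<dots> = mult L p (meet L p x)" using ax_bl(2)[OF assms(1,2)] by simp
  finally have e: "meet L p x = mult L p (meet L p x)" .
  have m: "meet L p x \<in> carrier L" using cl(1)[OF assms(1,2)] .
  have "leq L (mult L (meet L p x) p) (mult L x p)"
    using ax_mono[OF m assms(2) assms(1) meet_le2[OF assms(1,2)]] .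
  hence "leq L (mult L p (meet L p x)) (mult L p x)"
    using ax_comm(5)[OF m assms(1)] ax_comm(5)[OF assms(2,1)] by simp
  hence 1: "leq L (meet L p x) (mult L p x)" using e by simp
  have 2: "leq L (mult L p x) (meet L p x)"
    using meet_greatest[OF assms(1,2) cl(3)[OF assms(1,2)] mult_le1[OF assms(1,2)] mult_le2[OF assms(1,2)]] .
  show ?thesis using antisym[OF cl(3)[OF assms(1,2)] m 2 1] .
qed

lemma pw_cl: "x \<in> carrier L \<Longrightarrow> pw L x n \<in> carrier L"
  by (induct n) (auto simp: cl0 cl)

lemma pw_add: "x \<in> carrier L \<Longrightarrow> pw L x (n+m) = mult L (pw L x n) (pw L x m)"
proof (induct n)
  case 0 then show ?case by (simp add: mult_one_left pw_cl)
next
  case (Suc n) then show ?case by (simp add: ax_assoc(3) pw_cl)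
qed

lemma pw_le: "x \<in> carrier L \<Longrightarrow> 1 \<le> n \<Longrightarrow> leq L (pw L x n) x"
  by (cases n) (auto simp: mult_le1 pw_cl)

lemma pw_anti: assumes "x \<in> carrier L" "n \<le> m" shows "leq L (pw L x m) (pw L x n)"
proof -
  obtain k where "m = n + k" using assms by (metis le_add_diff_inverse)
  then have "pw L x m = mult L (pw L x n) (pw L x k)" using pw_add assms(1) by simp
  then show ?thesis using mult_le1[OF pw_cl[OF assms(1)] pw_cl[OF assms(1)]] by simp
qed

lemma pw_stable: assumes x: "x \<in> carrier L" and e: "pw L x i = pw L x j" and ij: "i < j"
  shows "pw L x (i+k) = pw L x i"
proof -
  have s: "pw L x (Suc i) = pw L x i"
  proof (rule antisym)
    show "leq L (pw L x (Suc i)) (pw L x i)" using pw_anti[OF x, of i "Suc i"] by simp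
    have "leq L (pw L x j) (pw L x (Suc i))" using pw_anti[OF x, of "Suc i" j] ij by simp
    then show "leq L (pw L x i) (pw L x (Suc i))" using e by simp
  qed (rule pw_cl[OF x])+
  show ?thesis
  proof (induct k)
    case 0 then show ?case by simp
  next
    case (Suc k)
    have "pw L x (i + Suc k) = mult L x (pw L x (i+k))" by simp
    also have "\<dots> = pw L x (Suc i)" using Suc by simp
    finally show ?case using s by simp
  qed
qed

lemma pw_idem_ex: assumes fin: "finite (carrier L)" and x: "x \<in> carrier L"
  shows "\<exists>n\<ge>1. mult L (pw L x n) (pw L x n) = pw L x n"
proof -
  let ?N = "card (carrier L)"
  have sub: "pw L x ` {1..?N+1} \<subseteq> carrier L" using pw_cl x by auto
  have "\<not> inj_on (pw L x) {1..?N+1}"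
  proof
    assume "inj_on (pw L x) {1..?N+1}"
    then have "card (pw L x ` {1..?N+1}) = ?N + 1" by (simp add: card_image)
    moreover have "card (pw L x ` {1..?N+1}) \<le> ?N" using card_mono[OF fin sub] .
    ultimately show False by simp
  qed
  then obtain i j where ij: "i \<in> {1..?N+1}" "j \<in> {1..?N+1}" "i \<noteq> j" "pw L x i = pw L x j"
    unfolding inj_on_def by blast
  have "\<exists>i j. 1 \<le> i \<and> i < j \<and> pw L x i = pw L x j"
  proof (cases "i < j")
    case True then show ?thesis using ij by auto
  next
    case False then have "j < i" using ij by auto
    then show ?thesis using ij by (metis atLeastAtMost_iff)
  qed
  then obtain i j where ij2: "1 \<le> i" "i < j" "pw L x i = pw L x j" by blast
  have "mult L (pw L x i) (pw L x i) = pw L x (i+i)" using pw_add x by simp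
  also have "\<dots> = pw L x i" using pw_stable[OF x ij2(3) ij2(2)] .
  finally show ?thesis using ij2(1) by blast
qed

lemma join_mult: assumes a: "a \<in> carrier L" and b: "b \<in> carrier L" and c: "c \<in> carrier L"
  and ab: "join L a b = one L" and ac: "join L a c = one L"
  shows "join L a (mult L b c) = one L"
proof -
  define d where "d = join L a (mult L b c)"
  have bc: "mult L b c \<in> carrier L" using cl(3)[OF b c] .
  have d: "d \<in> carrier L" unfolding d_def using cl(2)[OF a bc] .
  have ad: "leq L a d" unfolding d_def using join_ge1[OF a bc] .
  have bcd: "leq L (mult L b c) d" unfolding d_def using join_ge2[OF a bc] .
  have jab: "join L a b \<in> carrier L" using cl(2)[OF a b] .
  have jac: "join L a c \<in> carrier L" using cl(2)[OF a c] .
  have iad: "imp L a d \<in> carrier L" using cl(4)[OF a d] .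
  have icd: "imp L c d \<in> carrier L" using cl(4)[OF c d] .
  have ijd: "imp L (join L a b) d \<in> carrier L" using cl(4)[OF jab d] .
  have "leq L (mult L a a) d" using trans[OF cl(3)[OF a a] a d mult_le1[OF a a] ad] .
  then have a1: "leq L a (imp L a d)" using ax_res[OF a d a] by simp
  have "leq L (mult L a b) d" using trans[OF cl(3)[OF a b] a d mult_le1[OF a b] ad] .
  then have b1: "leq L b (imp L a d)" using ax_res[OF a d b] by simp
  have "leq L (join L a b) (imp L a d)" using join_least[OF a b iad a1 b1] .
  then have "leq L (mult L a (join L a b)) d" using ax_res[OF a d jab] by simp
  then have "leq L (mult L (join L a b) a) d" using ax_comm(5)[OF a jab] by simp
  then have 1: "leq L a (imp L (join L a b) d)" using ax_res[OF jab d a] by simp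
  have "leq L (mult L c a) d" using trans[OF cl(3)[OF c a] a d mult_le2[OF c a] ad] .
  then have a2: "leq L a (imp L c d)" using ax_res[OF c d a] by simp
  have "leq L (mult L c b) d" using bcd ax_comm(5)[OF b c] by simp
  then have b2: "leq L b (imp L c d)" using ax_res[OF c d b] by simp
  have "leq L (join L a b) (imp L c d)" using join_least[OF a b icd a2 b2] .
  then have "leq L (mult L c (join L a b)) d" using ax_res[OF c d jab] by simp
  then have "leq L (mult L (join L a b) c) d" using ax_comm(5)[OF c jab] by simp
  then have 2: "leq L c (imp L (join L a b) d)" using ax_res[OF jab d c] by simp
  have "leq L (join L a c) (imp L (join L a b) d)" using join_least[OF a c ijd 1 2] .
  then have "leq L (mult L (join L a b) (join L a c)) d" using ax_res[OF jab d jac] by simp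
  then have "leq L (one L) d" using ab ac mult_one_left[OF cl0(2)] by simp
  then show ?thesis using le_one_eq[OF d] d_def by simp
qed

lemma join_pw: assumes a: "a \<in> carrier L" and b: "b \<in> carrier L" and ab: "join L a b = one L"
  shows "join L a (pw L b m) = one L"
proof (induct m)
  case 0
  have "leq L (one L) (join L a (one L))" using join_ge2 a cl0 by blast
  then show ?case using le_one_eq a cl cl0 by simp
next
  case (Suc m) then show ?case using join_mult[OF a b pw_cl[OF b] ab] by simp
qed

lemma join_pw2: assumes a: "a \<in> carrier L" and b: "b \<in> carrier L" and ab: "join L a b = one L"
  shows "join L (pw L a n) (pw L b m) = one L"
proof -
  have "join L (pw L b m) a = one L" using join_pw[OF a b ab] ax_comm(2)[OF a pw_cl[OF b]] by simp
  then have "join L (pw L b m) (pw L a n) = one L" using join_pw[OF pw_cl[OF b] a] by blast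
  then show ?thesis using ax_comm(2)[OF pw_cl[OF a] pw_cl[OF b]] by simp
qed

lemma comp_one: assumes a: "a \<in> carrier L" and b: "b \<in> carrier L" and ab: "join L a b = one L"
  and m: "1 \<le> m" and le: "leq L (pw L a n) (pw L b m)"
  shows "b = one L"
proof -
  have "pw L b m = one L" using le_join_eq[OF pw_cl[OF a] pw_cl[OF b] le] join_pw2[OF a b ab] by simp
  then have "leq L (one L) b" using pw_le[OF b m] by simp
  then show ?thesis using le_one_eq b by simp
qed

lemma comp_one2: assumes a: "a \<in> carrier L" and b: "b \<in> carrier L" and ab: "join L a b = one L"
  and n: "1 \<le> n" and m: "1 \<le> m"
  and le: "leq L (pw L a n) (pw L b m) \<or> leq L (pw L b m) (pw L a n)"
  shows "a = one L \<or> b = one L"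
proof -
  have ba: "join L b a = one L" using ab ax_comm(2)[OF a b] by simp
  show ?thesis using le comp_one[OF a b ab m] comp_one[OF b a ba n] by blast
qed

lemma chain_max: "finite S \<Longrightarrow> S \<noteq> {} \<Longrightarrow> S \<subseteq> carrier L \<Longrightarrow> is_chain_in L S
  \<Longrightarrow> \<exists>m\<in>S. \<forall>y\<in>S. leq L y m"
proof (induct S rule: finite_ne_induct)
  case (singleton x) then show ?case using refl by auto
next
  case (insert x F)
  have "is_chain_in L F" using insert.prems unfolding is_chain_in_def by blast
  then obtain m where m: "m \<in> F" "\<forall>y\<in>F. leq L y m" using insert by auto
  have "leq L m x \<or> leq L x m" using insert.prems m(1) unfolding is_chain_in_def by blast
  then show ?case
  proof
    assume "leq L m x"
    note mx = this
    have "\<forall>y\<in>insert x F. leq L y x"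
    proof (intro ballI)
      fix y assume y: "y \<in> insert x F"
      show "leq L y x"
      proof (cases "y = x")
        case True then show ?thesis using refl insert.prems by auto
      next
        case False
        then have "y \<in> F" using y by simp
        then show ?thesis using trans[of y m x] m mx insert.prems by auto
      qed
    qed
    then show ?thesis by blast
  next
    assume "leq L x m"
    then show ?thesis using m by blast
  qed
qed

lemma zero_D: "zero L \<in> Dset L"
proof -
  have z: "mult L (zero L) (zero L) = zero L"
    using le_zero_eq[OF cl(3)[OF cl0(1) cl0(1)] mult_le1[OF cl0(1) cl0(1)]] .
  then have zi: "zero L \<in> idems L" using cl0 unfolding idems_def by simp
  have "comps L (zero L) = idems L" unfolding comps_def idems_def using ax_bound(1) by auto
  moreover have "is_chain_in L {y\<in>idems L. leq L y (zero L)}"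
    unfolding is_chain_in_def idems_def using le_zero_eq refl by auto
  ultimately show ?thesis unfolding Dset_def using zi by simp
qed

lemma pivot_prop: assumes fin: "finite (carrier L)"
  shows "pivot L \<in> Dset L \<and> (\<forall>y\<in>Dset L. leq L y (pivot L))"
proof -
  have DC: "Dset L \<subseteq> carrier L" unfolding Dset_def idems_def by auto
  have ch: "is_chain_in L (Dset L)" unfolding is_chain_in_def Dset_def comps_def by blast
  obtain m where m: "m \<in> Dset L" "\<forall>y\<in>Dset L. leq L y m"
    using chain_max[OF finite_subset[OF DC fin] _ DC ch] zero_D by blast
  have "pivot L = m" unfolding pivot_def
  proof (rule the_equality)
    show "m \<in> Dset L \<and> (\<forall>y\<in>Dset L. leq L y m)" using m by blast
  next
    fix z assume z: "z \<in> Dset L \<and> (\<forall>y\<in>Dset L. leq L y z)"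
    then have "leq L z m" "leq L m z" using m by auto
    then show "z = m" using antisym[of z m] z m DC by blast
  qed
  then show ?thesis using m by simp
qed

lemma chain_of_idems: assumes fin: "finite (carrier L)" and ch: "is_chain_in L (idems L)"
  shows "is_chain_in L (carrier L)"
  unfolding is_chain_in_def
proof (intro ballI)
  fix x y assume x: "x \<in> carrier L" and y: "y \<in> carrier L"
  define a where "a = imp L x y"
  define b where "b = imp L y x"
  have a: "a \<in> carrier L" and b: "b \<in> carrier L" using a_def b_def cl(4)[OF x y] cl(4)[OF y x] by auto
  have ab: "join L a b = one L" using a_def b_def ax_bl(1)[OF x y] by simp
  obtain n where n: "n \<ge> 1" "mult L (pw L a n) (pw L a n) = pw L a n" using pw_idem_ex[OF fin a] by blast
  obtain m where m: "m \<ge> 1" "mult L (pw L b m) (pw L b m) = pw L b m" using pw_idem_ex[OF fin b] by blast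
  have "pw L a n \<in> idems L" "pw L b m \<in> idems L" using n m pw_cl[OF a] pw_cl[OF b] unfolding idems_def by auto
  then have "leq L (pw L a n) (pw L b m) \<or> leq L (pw L b m) (pw L a n)"
    using ch unfolding is_chain_in_def by blast
  then have "a = one L \<or> b = one L" using comp_one2[OF a b ab n(1) m(1)] by blast
  then show "leq L x y \<or> leq L y x"
  proof
    assume "a = one L"
    then have "leq L (one L) (imp L x y)" using refl cl0 a_def by simp
    then show ?thesis using one_le_imp[OF x y] by simp
  next
    assume "b = one L"
    then have "leq L (one L) (imp L y x)" using refl cl0 b_def by simp
    then show ?thesis using one_le_imp[OF y x] by simp
  qed
qed

lemma neg_one: "neg L (one L) = zero L"
proof -
  have i: "imp L (one L) (zero L) \<in> carrier L" using cl(4)[OF cl0(2) cl0(1)] .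
  have "leq L (mult L (one L) (imp L (one L) (zero L))) (zero L)"
    using ax_res[OF cl0(2) cl0(1) i] refl[OF i] by simp
  then show ?thesis unfolding neg_def using mult_one_left[OF i] le_zero_eq[OF i] by simp
qed

lemma neg_zero: "neg L (zero L) = one L"
proof -
  have "leq L (one L) (imp L (zero L) (zero L))" using one_le_imp[OF cl0(1) cl0(1)] refl[OF cl0(1)] by simp
  then show ?thesis unfolding neg_def using le_one_eq[OF cl(4)[OF cl0(1) cl0(1)]] by simp
qed

lemma dir1: assumes fin: "finite (carrier L)" and ch: "is_chain_in L (carrier L)"
  shows "neg L (neg L (pivot L)) = pivot L"
proof -
  have "mult L (one L) (one L) = one L" using ax_bound(3) cl0 by simp
  then have oi: "one L \<in> idems L" using cl0 unfolding idems_def by simp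
  have "comps L (one L) = idems L" unfolding comps_def idems_def using ax_bound(2) by auto
  moreover have "is_chain_in L {y\<in>idems L. leq L y (one L)}"
    using ch unfolding is_chain_in_def idems_def by auto
  ultimately have "one L \<in> Dset L" unfolding Dset_def using oi by simp
  then have "leq L (one L) (pivot L)" using pivot_prop[OF fin] by blast
  moreover have "pivot L \<in> carrier L" using pivot_prop[OF fin] unfolding Dset_def idems_def by blast
  ultimately have "pivot L = one L" using le_one_eq by blast
  then show ?thesis using neg_one neg_zero by simp
qed

lemma dir2: assumes fin: "finite (carrier L)" and p0: "pivot L \<noteq> zero L"
  and nn: "neg L (neg L (pivot L)) = pivot L"
  shows "is_chain_in L (carrier L)"
proof -
  define p where "p = pivot L"
  have pD: "p \<in> Dset L" using pivot_prop[OF fin] p_def by simp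
  then have pC: "p \<in> carrier L" and pp: "mult L p p = p" and pc: "comps L p = idems L"
    and pdown: "is_chain_in L {y\<in>idems L. leq L y p}"
    unfolding Dset_def idems_def by auto
  define x where "x = imp L p (zero L)"
  have xC: "x \<in> carrier L" using x_def cl(4)[OF pC cl0(1)] by simp
  define a where "a = imp L x p"
  define b where "b = imp L p x"
  have a: "a \<in> carrier L" and b: "b \<in> carrier L" using a_def b_def cl(4)[OF xC pC] cl(4)[OF pC xC] by auto
  have ab: "join L a b = one L" using a_def b_def ax_bl(1)[OF xC pC] by simp
  obtain n where n: "n \<ge> 1" "mult L (pw L a n) (pw L a n) = pw L a n" using pw_idem_ex[OF fin a] by blast
  obtain m where m: "m \<ge> 1" "mult L (pw L b m) (pw L b m) = pw L b m" using pw_idem_ex[OF fin b] by blast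
  have ai: "pw L a n \<in> idems L" and bi: "pw L b m \<in> idems L"
    using n m pw_cl[OF a] pw_cl[OF b] unfolding idems_def by auto
  have nb: "\<not> leq L p b"
  proof
    assume "leq L p b"
    then have "leq L p x" using ax_res[OF pC xC pC] pp b_def by simp
    then have "leq L p (zero L)" using ax_res[OF pC cl0(1) pC] pp x_def by simp
    then show False using le_zero_eq[OF pC] p0 p_def by simp
  qed
  have "leq L p (pw L b m) \<or> leq L (pw L b m) p" using bi pc unfolding comps_def by blast
  moreover have "\<not> leq L p (pw L b m)" using nb trans[OF pC pw_cl[OF b] b _ pw_le[OF b m(1)]] by blast
  ultimately have bp: "leq L (pw L b m) p" by blast
  have "leq L p (pw L a n) \<or> leq L (pw L a n) p" using ai pc unfolding comps_def by blast
  then have "leq L (pw L a n) (pw L b m) \<or> leq L (pw L b m) (pw L a n)"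
  proof
    assume "leq L p (pw L a n)"
    then show ?thesis using trans[OF pw_cl[OF b] pC pw_cl[OF a] bp] by blast
  next
    assume "leq L (pw L a n) p"
    then show ?thesis using pdown ai bi bp unfolding is_chain_in_def by blast
  qed
  then have "a = one L \<or> b = one L" using comp_one2[OF a b ab n(1) m(1)] by blast
  moreover have "b \<noteq> one L" using nb ax_bound(2)[OF pC] by auto
  ultimately have "a = one L" by blast
  then have "leq L (one L) a" using refl cl0 by simp
  then have xp: "leq L x p" using one_le_imp[OF xC pC] a_def by simp
  have "x = meet L p x" using xp ax_comm(1)[OF xC pC] unfolding leq_def by simp
  also have "\<dots> = mult L p x" using idem_mult[OF pC xC pp] by simp
  also have "\<dots> = meet L p (zero L)" using ax_bl(2)[OF pC cl0(1)] x_def by simp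
  also have "\<dots> = zero L" using le_zero_eq[OF cl(1)[OF pC cl0(1)] meet_le2[OF pC cl0(1)]] .
  finally have "neg L p = zero L" unfolding neg_def x_def .
  then have p1: "p = one L" using nn neg_zero p_def by simp
  have "is_chain_in L (idems L)"
    using pdown ax_bound(2) p1 unfolding is_chain_in_def idems_def by auto
  then show ?thesis using chain_of_idems[OF fin] by blast
qed

end

theorem proposition1p11:
  fixes L :: "('a, 'b) bl_alg_scheme"
  assumes "BL_comet L"
  shows "BL_chain L \<longleftrightarrow> neg L (neg L (pivot L)) = pivot L"
proof -
  have bl: "BL_algebra L" and fin: "finite (carrier L)" and p0: "pivot L \<noteq> zero L"
    using assms unfolding BL_comet_def by auto
  interpret blc L using bl by unfold_locales
  show ?thesis unfolding BL_chain_def using bl fin p0 dir1 dir2 by blast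
qed

end
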